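(* For every $\lambda\in\mathscr{SP}(n)$, the minimal length representative of the coset $v(\lambda)W_P$ equals $u_{\lambda^*}$.
   Context: $W_{\mathrm{af}}$ is the affine Weyl group of type $C_n^{(1)}$ generated by $s_0,\dots,s_n$; $W=\langle s_1,\dots,s_n\rangle$ acts on $X^\vee=\bigoplus_{i=1}^n\mathbb{Z}\varepsilon_i$ ($s_i$ swaps $\varepsilon_i,\varepsilon_{i+1}$ for $i<n$; $s_n$ negates $\varepsilon_n$); $Q^\vee$ the coroot lattice spanned by $\varepsilon_i-\varepsilon_{i+1}$ and $\varepsilon_n$; $W_{\mathrm{af}}\cong W\ltimes Q^\vee$ (elements $wt_\xi$, $wt_\xi w^{-1}=t_{w\xi}$), $s_0=s_\theta t_{-\varepsilon_1}$ with $s_\theta=s_1\cdots s_{n-1}s_ns_{n-1}\cdots s_1$. $W_P=\langle s_1,\dots,s_{n-1}\rangle$. $\rho_i=s_{i-1}\cdots s_1s_0$ for $1\le i\le n$. $\mathscr{SP}(n)$ is the set of strict partitions $\lambda=(\lambda_1>\dots>\lambda_l>0)$ with $\lambda_1\le n$; $x_\lambda=\rho_{\lambda_l}\cdots\rho_{\lambda_1}$, and $v(\lambda)\in W$ is defined by $x_\lambda=v(\lambda)t_{-\xi}$ for some $\xi\in Q^\vee$. For $1\le k\le n$, $u_k=s_{n+1-k}\cdots s_{n-1}s_n$, and $u_\lambda=u_{\lambda_l}\cdots u_{\lambda_1}$. $\lambda^*=(n+1-\lambda_l,\dots,n+1-\lambda_1)$. *)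

theory Defs
  imports Main
begin

text \<open>
Vectors of the coweight lattice X = Z^n are modelled as functions
nat => int whose support lies in {1..n} (coordinate j is the coefficient of eps_j).
Elements of the affine Weyl group W_af = W semidirect Q are modelled faithfully as
affine maps of X: the element w t_xi acts by x |-> w(x + xi), so that the product
in W_af is function composition.  All generators act as the identity on coordinates
outside {1..n}, hence equality of group elements is equality of functions.
\<close>

type_synonym vec = "nat \<Rightarrow> int"
type_synonym elt = "vec \<Rightarrow> vec"

definition trans :: "vec \<Rightarrow> elt" where
  "trans \<xi> = (\<lambda>x j. x j + \<xi> j)"

definition eps :: "nat \<Rightarrow> vec" where
  "eps i = (\<lambda>j. if j = i then 1 else 0)"

definition sfin :: "nat \<Rightarrow> nat \<Rightarrow> elt" where
  "sfin n i = (if i = n then (\<lambda>x. x(n := - x n))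
               else (\<lambda>x j. x (if j = i then i + 1 else if j = i + 1 then i else j)))"

definition wordfin :: "nat \<Rightarrow> nat list \<Rightarrow> elt" where
  "wordfin n ws = foldr (\<lambda>i f. sfin n i \<circ> f) ws id"

definition s_theta :: "nat \<Rightarrow> elt" where
  "s_theta n = wordfin n ([1..<n] @ [n] @ rev [1..<n])"

definition s0 :: "nat \<Rightarrow> elt" where
  "s0 n = s_theta n \<circ> trans (\<lambda>j. - eps 1 j)"

definition saff :: "nat \<Rightarrow> nat \<Rightarrow> elt" where
  "saff n i = (if i = 0 then s0 n else sfin n i)"

definition wordaff :: "nat \<Rightarrow> nat list \<Rightarrow> elt" where
  "wordaff n ws = foldr (\<lambda>i f. saff n i \<circ> f) ws id"

definition Wfin :: "nat \<Rightarrow> elt set" where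
  "Wfin n = {wordfin n ws | ws. set ws \<subseteq> {1..n}}"

definition WP :: "nat \<Rightarrow> elt set" where
  "WP n = {wordfin n ws | ws. set ws \<subseteq> {1..n-1}}"

inductive_set coroot_lattice :: "nat \<Rightarrow> vec set" for n where
  zero: "(\<lambda>_. 0) \<in> coroot_lattice n"
| simple: "\<lbrakk>1 \<le> i; i < n; \<xi> \<in> coroot_lattice n\<rbrakk> \<Longrightarrow>
      (\<lambda>j. \<xi> j + c * (eps i j - eps (i+1) j)) \<in> coroot_lattice n"
| long: "\<xi> \<in> coroot_lattice n \<Longrightarrow> (\<lambda>j. \<xi> j + c * eps n j) \<in> coroot_lattice n"

definition lenW :: "nat \<Rightarrow> elt \<Rightarrow> nat" where
  "lenW n w = (LEAST k. \<exists>ws. length ws = k \<and> set ws \<subseteq> {1..n} \<and> wordfin n ws = w)"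

definition is_min_length_rep :: "nat \<Rightarrow> elt \<Rightarrow> elt set \<Rightarrow> bool" where
  "is_min_length_rep n w A \<longleftrightarrow>
     w \<in> A \<and> (\<forall>y\<in>A. lenW n w \<le> lenW n y \<and> (lenW n y = lenW n w \<longrightarrow> y = w))"

definition coset_WP :: "nat \<Rightarrow> elt \<Rightarrow> elt set" where
  "coset_WP n v = (\<lambda>p. v \<circ> p) ` WP n"

definition strict_partition :: "nat \<Rightarrow> nat list \<Rightarrow> bool" where
  "strict_partition n lam \<longleftrightarrow> sorted_wrt (>) lam \<and> set lam \<subseteq> {1..n}"

definition rho :: "nat \<Rightarrow> nat \<Rightarrow> elt" where
  "rho n i = wordaff n (rev [0..<i])"

definition x_lam :: "nat \<Rightarrow> nat list \<Rightarrow> elt" where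
  "x_lam n lam = foldr (\<circ>) (map (rho n) (rev lam)) id"

definition v_lam :: "nat \<Rightarrow> nat list \<Rightarrow> elt" where
  "v_lam n lam = (THE v. v \<in> Wfin n \<and>
      (\<exists>\<xi>\<in>coroot_lattice n. x_lam n lam = v \<circ> trans (\<lambda>j. - \<xi> j)))"

definition u_k :: "nat \<Rightarrow> nat \<Rightarrow> elt" where
  "u_k n k = wordfin n [n + 1 - k..<n + 1]"

definition u_lam :: "nat \<Rightarrow> nat list \<Rightarrow> elt" where
  "u_lam n lam = foldr (\<circ>) (map (u_k n) (rev lam)) id"

definition dual_lam :: "nat \<Rightarrow> nat list \<Rightarrow> nat list" where
  "dual_lam n lam = map (\<lambda>k. n + 1 - k) (rev lam)"

end

theory Submission
  imports Defs "HOL-Library.Function_Algebras"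
begin

definition sw :: "nat \<Rightarrow> nat \<Rightarrow> nat" where
  "sw i j = (if j = i then i+1 else if j = i+1 then i else j)"

lemma sw_sw[simp]: "sw i (sw i j) = j" by (simp add: sw_def)

lemma sfin_lt: "i \<noteq> n \<Longrightarrow> sfin n i x = (\<lambda>j. x (sw i j))"
  by (simp add: sfin_def sw_def)
lemma sfin_n: "sfin n n x = x(n := - x n)" by (simp add: sfin_def)
lemma sfin_invol[simp]: "sfin n i (sfin n i x) = x"
  by (cases "i = n") (auto simp: sfin_def fun_eq_iff)
lemma sfin_add: "sfin n i (x + y) = sfin n i x + sfin n i y"
  by (cases "i = n") (auto simp: sfin_def fun_eq_iff)
lemma sfin_uminus: "sfin n i (- x) = - sfin n i x"
  by (cases "i = n") (auto simp: sfin_def fun_eq_iff)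
lemma sfin_zero: "sfin n i 0 = 0"
  by (cases "i = n") (auto simp: sfin_def fun_eq_iff)

lemma wordfin_Nil[simp]: "wordfin n [] = id" by (simp add: wordfin_def)
lemma wordfin_Cons[simp]: "wordfin n (i # ws) = sfin n i \<circ> wordfin n ws"
  by (simp add: wordfin_def)
lemma wordfin_append: "wordfin n (xs @ ys) = wordfin n xs \<circ> wordfin n ys"
  by (induction xs) auto
lemma wordfin_snoc: "wordfin n (xs @ [i]) = wordfin n xs \<circ> sfin n i"
  by (simp add: wordfin_append)

lemma wordfin_add: "wordfin n ws (x + y) = wordfin n ws x + wordfin n ws y"
  by (induction ws) (simp_all only: wordfin_Cons wordfin_Nil comp_apply id_apply sfin_add)
lemma wordfin_uminus: "wordfin n ws (- x) = - wordfin n ws x"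
  by (induction ws) (simp_all only: wordfin_Cons wordfin_Nil comp_apply id_apply sfin_uminus)
lemma wordfin_diff: "wordfin n ws (x - y) = wordfin n ws x - wordfin n ws y"
  by (metis diff_conv_add_uminus wordfin_add wordfin_uminus)
lemma wordfin_zero: "wordfin n ws 0 = 0"
  by (induction ws) (simp_all only: wordfin_Cons wordfin_Nil comp_apply id_apply sfin_zero)

lemma wordfin_rev1: "wordfin n (rev ws) (wordfin n ws x) = x"
  by (induction ws arbitrary: x) (auto simp: wordfin_append)
lemma wordfin_rev2: "wordfin n ws (wordfin n (rev ws) x) = x"
  by (induction ws arbitrary: x) (auto simp: wordfin_append)

lemma wordfin_inj: "wordfin n ws x = wordfin n ws y \<Longrightarrow> x = y"
  by (metis wordfin_rev1)

definition supp_ok :: "nat \<Rightarrow> vec \<Rightarrow> bool" where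
  "supp_ok n x \<longleftrightarrow> (\<forall>j. \<not> (1 \<le> j \<and> j \<le> n) \<longrightarrow> x j = 0)"

lemma sfin_outside: "1 \<le> i \<Longrightarrow> i \<le> n \<Longrightarrow> \<not> (1 \<le> k \<and> k \<le> n) \<Longrightarrow> sfin n i x k = x k"
  by (cases "i = n") (auto simp: sfin_def)

lemma wordfin_outside: "set ws \<subseteq> {1..n} \<Longrightarrow> \<not> (1 \<le> k \<and> k \<le> n) \<Longrightarrow> wordfin n ws x k = x k"
  by (induction ws) (auto simp: sfin_outside)

lemma wordfin_supp: "set ws \<subseteq> {1..n} \<Longrightarrow> supp_ok n x \<Longrightarrow> supp_ok n (wordfin n ws x)"
  by (simp add: supp_ok_def wordfin_outside)

section \<open>lexicographic sign\<close>

definition lexpos :: "vec \<Rightarrow> bool" where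
  "lexpos y \<longleftrightarrow> (\<exists>k. y k > 0 \<and> (\<forall>i<k. y i = 0))"
definition lexneg :: "vec \<Rightarrow> bool" where
  "lexneg y \<longleftrightarrow> (\<exists>k. y k < 0 \<and> (\<forall>i<k. y i = 0))"

lemma lex_first:
  assumes "y k \<noteq> 0" "\<forall>i<k. y i = 0"
  shows "(lexpos y \<longleftrightarrow> y k > 0) \<and> (lexneg y \<longleftrightarrow> y k < 0)"
proof -
  have *: "\<forall>i<k'. y i = 0 \<Longrightarrow> y k' \<noteq> 0 \<Longrightarrow> k' = k" for k'
    using assms by (metis linorder_neqE_nat)
  show ?thesis unfolding lexpos_def lexneg_def
    using assms * by (metis less_irrefl)
qed

lemma lex_tri: "y \<noteq> 0 \<Longrightarrow> lexpos y \<or> lexneg y"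
proof -
  assume "y \<noteq> 0"
  then obtain k where "y k \<noteq> 0" by (auto simp: fun_eq_iff)
  define m where "m = (LEAST k. y k \<noteq> 0)"
  have m: "y m \<noteq> 0" using \<open>y k \<noteq> 0\<close> unfolding m_def by (rule LeastI)
  have "\<forall>i<m. y i = 0" unfolding m_def using not_less_Least by blast
  with m lex_first[of y m] show ?thesis by (cases "y m > 0") auto
qed

lemma lex_not_both: "\<not> (lexpos y \<and> lexneg y)"
proof
  assume "lexpos y \<and> lexneg y"
  then obtain k k' where k: "y k > 0" "\<forall>i<k. y i = 0" and k': "y k' < 0" "\<forall>i<k'. y i = 0"
    unfolding lexpos_def lexneg_def by blast
  then show False by (cases k k' rule: linorder_cases) auto
qed

lemma lexneg_uminus[simp]: "lexneg (- y) \<longleftrightarrow> lexpos y"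
  unfolding lexpos_def lexneg_def by auto
lemma lexpos_uminus[simp]: "lexpos (- y) \<longleftrightarrow> lexneg y"
  unfolding lexpos_def lexneg_def by auto
lemma lexpos_zero[simp]: "\<not> lexpos 0" unfolding lexpos_def by auto
lemma lexneg_zero[simp]: "\<not> lexneg 0" unfolding lexneg_def by auto

lemma lexpos_add: assumes "lexpos x" "lexpos y" shows "lexpos (x + y)"
proof -
  obtain k where k: "x k > 0" "\<forall>i<k. x i = 0" using assms(1) unfolding lexpos_def by blast
  obtain m where m: "y m > 0" "\<forall>i<m. y i = 0" using assms(2) unfolding lexpos_def by blast
  show ?thesis unfolding lexpos_def
  proof (cases k m rule: linorder_cases)
    case less
    then show "\<exists>k. (x + y) k > 0 \<and> (\<forall>i<k. (x + y) i = 0)"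
      using k m by (intro exI[of _ k]) auto
  next
    case equal
    then show "\<exists>k. (x + y) k > 0 \<and> (\<forall>i<k. (x + y) i = 0)"
      using k m by (intro exI[of _ k]) auto
  next
    case greater
    then show "\<exists>k. (x + y) k > 0 \<and> (\<forall>i<k. (x + y) i = 0)"
      using k m by (intro exI[of _ m]) auto
  qed
qed

lemma lexneg_add: assumes "lexneg x" "lexneg y" shows "lexneg (x + y)"
proof -
  have "lexpos (-x + -y)" by (rule lexpos_add) (simp_all add: assms)
  then show ?thesis by (metis lexpos_uminus minus_add_distrib)
qed

lemma not_lexneg: "\<not> lexneg x \<longleftrightarrow> x = 0 \<or> lexpos x"
  using lex_tri lex_not_both by (metis lexneg_zero)

lemma lexneg_add_split: "lexneg (x + y) \<Longrightarrow> lexneg x \<or> lexneg y"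
  using not_lexneg lexpos_add by (metis add.right_neutral add.left_neutral lex_not_both)

definition SP :: "nat \<Rightarrow> elt \<Rightarrow> (nat \<Rightarrow> nat) \<Rightarrow> (nat \<Rightarrow> int) \<Rightarrow> bool" where
 "SP n w \<tau> d \<longleftrightarrow> bij_betw \<tau> {1..n} {1..n} \<and> (\<forall>j. d j = 1 \<or> d j = -1) \<and>
    (\<forall>x j. j \<in> {1..n} \<longrightarrow> w x (\<tau> j) = d j * x j) \<and> (\<forall>x k. k \<notin> {1..n} \<longrightarrow> w x k = x k)"

lemma bij_sw: "1 \<le> i \<Longrightarrow> i < n \<Longrightarrow> bij_betw (sw i) {1..n} {1..n}"
  by (rule bij_betw_byWitness[where f'="sw i"]) (auto simp: sw_def)

lemma SP_word:
  "set ws \<subseteq> {1..n} \<Longrightarrow> \<exists>\<tau> d. SP n (wordfin n ws) \<tau> d \<and> (set ws \<subseteq> {1..n-1} \<longrightarrow> (\<forall>j. d j = 1))"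
proof (induction ws)
  case Nil
  show ?case by (intro exI[of _ id] exI[of _ "\<lambda>_. 1"]) (simp add: SP_def bij_betw_def)
next
  case (Cons i ws)
  then obtain \<tau> d where SPw: "SP n (wordfin n ws) \<tau> d" and P: "set ws \<subseteq> {1..n-1} \<longrightarrow> (\<forall>j. d j = 1)"
    by auto
  have i: "1 \<le> i" "i \<le> n" using Cons.prems by auto
  show ?case
  proof (cases "i = n")
    case True
    let ?d = "\<lambda>j. if \<tau> j = n then - d j else d j"
    have "SP n (wordfin n (i#ws)) \<tau> ?d"
      unfolding SP_def
    proof (intro conjI allI impI)
      show "bij_betw \<tau> {1..n} {1..n}" using SPw unfolding SP_def by blast
      show "?d j = 1 \<or> ?d j = -1" for j using SPw unfolding SP_def by (metis minus_minus)
      show "wordfin n (i # ws) x (\<tau> j) = ?d j * x j" if "j \<in> {1..n}" for x j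
      proof -
        have h: "wordfin n ws x (\<tau> j) = d j * x j" using SPw that unfolding SP_def by blast
        show ?thesis using h by (cases "\<tau> j = n") (auto simp: sfin_n True)
      qed
      show "wordfin n (i # ws) x k = x k" if "k \<notin> {1..n}" for x k
      proof -
        have "k \<noteq> n" using that i True by auto
        then show ?thesis using SPw that True unfolding SP_def by (simp add: sfin_n)
      qed
    qed
    moreover have "\<not> set (i#ws) \<subseteq> {1..n-1}" using True i by auto
    ultimately show ?thesis by blast
  next
    case False
    have bij: "bij_betw (sw i \<circ> \<tau>) {1..n} {1..n}"
      using SPw bij_sw[of i n] i False unfolding SP_def by (auto intro: bij_betw_trans)
    have "SP n (wordfin n (i#ws)) (sw i \<circ> \<tau>) d"
      unfolding SP_def
    proof (intro conjI allI impI)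
      show "bij_betw (sw i \<circ> \<tau>) {1..n} {1..n}" by (rule bij)
      show "d j = 1 \<or> d j = -1" for j using SPw unfolding SP_def by auto
      show "wordfin n (i # ws) x ((sw i \<circ> \<tau>) j) = d j * x j" if "j \<in> {1..n}" for x j
        using SPw that False unfolding SP_def by (simp add: sfin_lt)
      show "wordfin n (i # ws) x k = x k" if "k \<notin> {1..n}" for x k
      proof -
        have "sw i k = k" using that i False by (auto simp: sw_def)
        then show ?thesis using SPw that False unfolding SP_def by (simp add: sfin_lt)
      qed
    qed
    moreover have "set (i#ws) \<subseteq> {1..n-1} \<longrightarrow> (\<forall>j. d j = 1)" using P by auto
    ultimately show ?thesis by blast
  qed
qed

lemma SP_surj: "SP n w \<tau> d \<Longrightarrow> k \<in> {1..n} \<Longrightarrow> \<exists>j\<in>{1..n}. \<tau> j = k"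
  unfolding SP_def bij_betw_def by (metis imageE)

lemma SP_inj: "SP n w \<tau> d \<Longrightarrow> j \<in> {1..n} \<Longrightarrow> j' \<in> {1..n} \<Longrightarrow> \<tau> j = \<tau> j' \<Longrightarrow> j = j'"
  unfolding SP_def bij_betw_def inj_on_def by blast

lemma SP_range: "SP n w \<tau> d \<Longrightarrow> j \<in> {1..n} \<Longrightarrow> \<tau> j \<in> {1..n}"
  unfolding SP_def bij_betw_def by (metis imageI)

lemma SP_eps:
  assumes sp: "SP n w \<tau> d" and j: "j \<in> {1..n}"
  shows "w (eps j) = (\<lambda>k. d j * eps (\<tau> j) k)"
proof
  fix k
  show "w (eps j) k = d j * eps (\<tau> j) k"
  proof (cases "k \<in> {1..n}")
    case True
    then obtain j' where j': "j' \<in> {1..n}" "\<tau> j' = k" using SP_surj[OF sp] by blast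
    have "w (eps j) k = d j' * eps j j'" using sp j' unfolding SP_def by auto
    also have "\<dots> = d j * eps (\<tau> j) k"
      using SP_inj[OF sp j j'(1)] j' by (auto simp: eps_def)
    finally show ?thesis .
  next
    case False
    then have "\<tau> j \<noteq> k" using SP_range[OF sp j] by auto
    moreover have "j \<noteq> k" using False j by auto
    ultimately show ?thesis using sp False unfolding SP_def by (auto simp: eps_def)
  qed
qed

definition one :: "nat \<Rightarrow> vec" where
  "one n = (\<lambda>j. if 1 \<le> j \<and> j \<le> n then 1 else 0)"

definition oneS :: "nat \<Rightarrow> nat set \<Rightarrow> vec" where
  "oneS n S = (\<lambda>j. if 1 \<le> j \<and> j \<le> n then (if j \<in> S then -1 else 1) else 0)"

lemma SP_one: "SP n w \<tau> d \<Longrightarrow> j \<in> {1..n} \<Longrightarrow> w (one n) (\<tau> j) = d j"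
  unfolding SP_def one_def by auto

section \<open>positive roots\<close>

definition alpha :: "nat \<Rightarrow> nat \<Rightarrow> vec" where
  "alpha n k = (if k = n then eps n else eps k - eps (k+1))"

definition PhiP :: "nat \<Rightarrow> vec set" where
  "PhiP n = {eps i - eps j | i j. 1 \<le> i \<and> i < j \<and> j \<le> n}
          \<union> {eps i + eps j | i j. 1 \<le> i \<and> i < j \<and> j \<le> n} \<union> {eps i | i. 1 \<le> i \<and> i \<le> n}"

lemma finite_PhiP: "finite (PhiP n)"
proof -
  have "PhiP n \<subseteq> (\<lambda>(i,j). eps i - eps j) ` ({1..n} \<times> {1..n}) \<union> (\<lambda>(i,j). eps i + eps j) ` ({1..n} \<times> {1..n})
     \<union> eps ` {1..n}"
    unfolding PhiP_def by force
  then show ?thesis by (rule finite_subset) auto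
qed

lemma sfin_diff: "sfin n i (x - y) = sfin n i x - sfin n i y"
  by (metis diff_conv_add_uminus sfin_add sfin_uminus)

lemma eps_sfin_lt: "i \<noteq> n \<Longrightarrow> sfin n i (eps a) = eps (sw i a)"
  by (auto simp: sfin_lt eps_def fun_eq_iff sw_def)

lemma eps_sfin_n: "sfin n n (eps a) = (if a = n then - eps n else eps a)"
  by (auto simp: sfin_n eps_def fun_eq_iff)

lemma lexpos_eps_diff: "i < j \<Longrightarrow> lexpos (eps i - eps j)"
  using lex_first[of "eps i - eps j" i] by (auto simp: eps_def)
lemma lexpos_eps_add: "i < j \<Longrightarrow> lexpos (eps i + eps j)"
  using lex_first[of "eps i + eps j" i] by (auto simp: eps_def)
lemma lexpos_eps: "lexpos (eps i)"
  using lex_first[of "eps i" i] by (auto simp: eps_def)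

lemma PhiP_lexpos: "\<beta> \<in> PhiP n \<Longrightarrow> lexpos \<beta>"
  unfolding PhiP_def using lexpos_eps_diff lexpos_eps_add lexpos_eps by auto

lemma alpha_PhiP: assumes "1 \<le> k" "k \<le> n" shows "alpha n k \<in> PhiP n"
proof (cases "k = n")
  case True then show ?thesis using assms by (auto simp: PhiP_def alpha_def)
next
  case False
  then have "alpha n k = eps k - eps (k+1)" "k + 1 \<le> n" using assms by (auto simp: alpha_def)
  moreover have "\<exists>i j. eps k - eps (k+1) = eps i - eps j \<and> 1 \<le> i \<and> i < j \<and> j \<le> n"
    by (rule exI[of _ k], rule exI[of _ "k+1"]) (use assms \<open>k + 1 \<le> n\<close> in simp)
  ultimately show ?thesis unfolding PhiP_def by simp
qed

lemma sfin_alpha: "1 \<le> k \<Longrightarrow> k \<le> n \<Longrightarrow> sfin n k (alpha n k) = - alpha n k"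
  by (cases "k = n") (auto simp: alpha_def eps_sfin_n eps_sfin_lt sfin_diff sw_def)

lemma sfin_PhiP:
  assumes k: "1 \<le> k" "k \<le> n" and b: "\<beta> \<in> PhiP n" "\<beta> \<noteq> alpha n k"
  shows "sfin n k \<beta> \<in> PhiP n"
proof (cases "k = n")
  case True
  from b show ?thesis
    unfolding PhiP_def
  proof (elim UnE CollectE exE conjE)
    fix i j assume "\<beta> = eps i - eps j" "1 \<le> i" "i < j" "j \<le> n"
    then show "sfin n k \<beta> \<in> {eps i - eps j |i j. 1 \<le> i \<and> i < j \<and> j \<le> n} \<union>
        {eps i + eps j |i j. 1 \<le> i \<and> i < j \<and> j \<le> n} \<union> {eps i |i. 1 \<le> i \<and> i \<le> n}"
      using True by (cases "j = n") (auto simp: sfin_diff eps_sfin_n)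
  next
    fix i j assume "\<beta> = eps i + eps j" "1 \<le> i" "i < j" "j \<le> n"
    then show "sfin n k \<beta> \<in> {eps i - eps j |i j. 1 \<le> i \<and> i < j \<and> j \<le> n} \<union>
        {eps i + eps j |i j. 1 \<le> i \<and> i < j \<and> j \<le> n} \<union> {eps i |i. 1 \<le> i \<and> i \<le> n}"
      using True by (cases "j = n") (auto simp: sfin_add eps_sfin_n)
  next
    fix i assume "\<beta> = eps i" "1 \<le> i" "i \<le> n"
    then show "sfin n k \<beta> \<in> {eps i - eps j |i j. 1 \<le> i \<and> i < j \<and> j \<le> n} \<union>
        {eps i + eps j |i j. 1 \<le> i \<and> i < j \<and> j \<le> n} \<union> {eps i |i. 1 \<le> i \<and> i \<le> n}"
      using True b(2) by (auto simp: eps_sfin_n alpha_def)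
  qed
next
  case False
  have swr: "1 \<le> i \<Longrightarrow> i \<le> n \<Longrightarrow> 1 \<le> sw k i \<and> sw k i \<le> n" for i
    using k False by (auto simp: sw_def)
  have swinj: "sw k i = sw k j \<Longrightarrow> i = j" for i j by (metis sw_sw)
  from b show ?thesis
    unfolding PhiP_def
  proof (elim UnE CollectE exE conjE)
    fix i j assume h: "\<beta> = eps i - eps j" "1 \<le> i" "i < j" "j \<le> n"
    have "\<not> (i = k \<and> j = k + 1)" using h b(2) False by (auto simp: alpha_def)
    then have "sw k i < sw k j" using h by (auto simp: sw_def)
    then show "sfin n k \<beta> \<in> {eps i - eps j |i j. 1 \<le> i \<and> i < j \<and> j \<le> n} \<union>
        {eps i + eps j |i j. 1 \<le> i \<and> i < j \<and> j \<le> n} \<union> {eps i |i. 1 \<le> i \<and> i \<le> n}"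
      using h False swr[of i] swr[of j] by (auto simp: sfin_diff eps_sfin_lt)
  next
    fix i j assume h: "\<beta> = eps i + eps j" "1 \<le> i" "i < j" "j \<le> n"
    have ne: "sw k i \<noteq> sw k j" using h swinj by auto
    have e: "sfin n k \<beta> = eps (sw k i) + eps (sw k j)" using h False by (simp add: sfin_add eps_sfin_lt)
    show "sfin n k \<beta> \<in> {eps i - eps j |i j. 1 \<le> i \<and> i < j \<and> j \<le> n} \<union>
        {eps i + eps j |i j. 1 \<le> i \<and> i < j \<and> j \<le> n} \<union> {eps i |i. 1 \<le> i \<and> i \<le> n}"
    proof (cases "sw k i < sw k j")
      case True
      have r: "1 \<le> sw k i" "sw k i \<le> n" "1 \<le> sw k j" "sw k j \<le> n" using h swr[of i] swr[of j] by auto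
      have "sfin n k \<beta> \<in> {eps i + eps j |i j. 1 \<le> i \<and> i < j \<and> j \<le> n}"
        using e r True by blast
      then show ?thesis by blast
    next
      case False
      then have "sw k j < sw k i" using ne by auto
      moreover have "sfin n k \<beta> = eps (sw k j) + eps (sw k i)" using e by (simp add: add.commute)
      moreover have r: "1 \<le> sw k i" "sw k i \<le> n" "1 \<le> sw k j" "sw k j \<le> n" using h swr[of i] swr[of j] by auto
      ultimately have "sfin n k \<beta> \<in> {eps i + eps j |i j. 1 \<le> i \<and> i < j \<and> j \<le> n}"
        by blast
      then show ?thesis by blast
    qed
  next
    fix i assume "\<beta> = eps i" "1 \<le> i" "i \<le> n"
    then show "sfin n k \<beta> \<in> {eps i - eps j |i j. 1 \<le> i \<and> i < j \<and> j \<le> n} \<union>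
        {eps i + eps j |i j. 1 \<le> i \<and> i < j \<and> j \<le> n} \<union> {eps i |i. 1 \<le> i \<and> i \<le> n}"
      using False swr[of i] by (auto simp: eps_sfin_lt)
  qed
qed

definition NN :: "nat \<Rightarrow> elt \<Rightarrow> nat" where
  "NN n w = card {\<beta> \<in> PhiP n. lexneg (w \<beta>)}"

lemma NN_step:
  assumes k: "1 \<le> k" "k \<le> n" and odd: "\<And>x. w (- x) = - w x" and nz: "w (alpha n k) \<noteq> 0"
  shows "(lexneg (w (alpha n k)) \<longrightarrow> NN n (w \<circ> sfin n k) + 1 = NN n w)
       \<and> (\<not> lexneg (w (alpha n k)) \<longrightarrow> NN n (w \<circ> sfin n k) = NN n w + 1)"
proof -
  let ?P = "PhiP n" let ?a = "alpha n k" let ?s = "sfin n k"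
  define A where "A = {\<beta>\<in>?P. lexneg (w (?s \<beta>))}"
  define B where "B = {\<beta>\<in>?P. lexneg (w \<beta>)}"
  have finA: "finite A" and finB: "finite B" unfolding A_def B_def using finite_PhiP by auto
  have aP: "?a \<in> ?P" using alpha_PhiP k by auto
  have nota: "?s \<beta> \<noteq> ?a" if "\<beta> \<in> ?P" for \<beta>
  proof
    assume "?s \<beta> = ?a"
    then have "\<beta> = - ?a" using sfin_alpha[OF k] by (metis sfin_invol)
    then have "lexneg \<beta>" using PhiP_lexpos[OF aP] by simp
    then show False using PhiP_lexpos[OF that] lex_not_both by blast
  qed
  have AB: "A - {?a} = ?s ` (B - {?a})"
  proof
    show "A - {?a} \<subseteq> ?s ` (B - {?a})"
    proof
      fix \<beta> assume "\<beta> \<in> A - {?a}"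
      then have h: "\<beta> \<in> ?P" "\<beta> \<noteq> ?a" "lexneg (w (?s \<beta>))" unfolding A_def by auto
      have "?s \<beta> \<in> B - {?a}" using h sfin_PhiP[OF k] nota unfolding B_def by auto
      moreover have "\<beta> = ?s (?s \<beta>)" by simp
      ultimately show "\<beta> \<in> ?s ` (B - {?a})" by blast
    qed
  next
    show "?s ` (B - {?a}) \<subseteq> A - {?a}"
    proof
      fix \<beta> assume "\<beta> \<in> ?s ` (B - {?a})"
      then obtain \<gamma> where g: "\<gamma> \<in> ?P" "\<gamma> \<noteq> ?a" "lexneg (w \<gamma>)" "\<beta> = ?s \<gamma>" unfolding B_def by auto
      show "\<beta> \<in> A - {?a}" using g sfin_PhiP[OF k g(1,2)] nota[OF g(1)] unfolding A_def by auto
    qed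
  qed
  have inj: "inj_on ?s X" for X by (rule inj_onI) (metis sfin_invol)
  have cardAB: "card (A - {?a}) = card (B - {?a})" by (simp add: AB card_image inj)
  have "w (?s ?a) = - w ?a" using sfin_alpha[OF k] odd by simp
  then have aA: "?a \<in> A \<longleftrightarrow> lexpos (w ?a)" unfolding A_def using aP by simp
  have aB: "?a \<in> B \<longleftrightarrow> lexneg (w ?a)" unfolding B_def using aP by simp
  have tri: "lexpos (w ?a) \<longleftrightarrow> \<not> lexneg (w ?a)" using lex_tri[OF nz] lex_not_both by blast
  have NA: "NN n (w \<circ> ?s) = card A" unfolding NN_def A_def by simp
  have NB: "NN n w = card B" unfolding NN_def B_def by simp
  show ?thesis
  proof (intro conjI impI)
    assume "lexneg (w ?a)"
    then have "?a \<in> B" "?a \<notin> A" using aA aB tri by auto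
    then have "card B = Suc (card (B - {?a}))" "A - {?a} = A"
      using card.remove[OF finB] by auto
    then show "NN n (w \<circ> ?s) + 1 = NN n w"
      using cardAB NA NB by simp
  next
    assume "\<not> lexneg (w ?a)"
    then have "?a \<notin> B" "?a \<in> A" using aA aB tri by auto
    then have "card A = Suc (card (A - {?a}))" "B - {?a} = B"
      using card.remove[OF finA] by auto
    then show "NN n (w \<circ> ?s) = NN n w + 1"
      using cardAB NA NB by simp
  qed
qed

lemma NN_id: "NN n id = 0"
proof -
  have e: "{\<beta> \<in> PhiP n. lexneg \<beta>} = {}" using PhiP_lexpos lex_not_both by auto
  show ?thesis unfolding NN_def id_def by (simp only: e card.empty)
qed

lemma NN_id': "NN n (\<lambda>x. x) = 0" using NN_id by (simp add: id_def)

lemma NN_pos: "1 \<le> k \<Longrightarrow> k \<le> n \<Longrightarrow> lexneg (w (alpha n k)) \<Longrightarrow> NN n w > 0"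
  unfolding NN_def using alpha_PhiP finite_PhiP by (subst card_gt_0_iff) auto

lemma alpha_nz: "1 \<le> k \<Longrightarrow> k \<le> n \<Longrightarrow> alpha n k \<noteq> 0"
  using PhiP_lexpos[OF alpha_PhiP] lexpos_zero by metis

lemma word_alpha_nz: "1 \<le> k \<Longrightarrow> k \<le> n \<Longrightarrow> wordfin n ws (alpha n k) \<noteq> 0"
  using alpha_nz wordfin_inj wordfin_zero by metis

lemma NN_word_step:
  assumes "1 \<le> k" "k \<le> n"
  shows "(lexneg (wordfin n ws (alpha n k)) \<longrightarrow> NN n (wordfin n (ws @ [k])) + 1 = NN n (wordfin n ws))
       \<and> (\<not> lexneg (wordfin n ws (alpha n k)) \<longrightarrow> NN n (wordfin n (ws @ [k])) = NN n (wordfin n ws) + 1)"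
  using NN_step[OF assms, of "wordfin n ws"] wordfin_uminus word_alpha_nz[OF assms]
  by (simp add: wordfin_snoc)

lemma NN_le_length: "set ws \<subseteq> {1..n} \<Longrightarrow> NN n (wordfin n ws) \<le> length ws"
proof (induction ws rule: rev_induct)
  case Nil then show ?case by (simp add: NN_id NN_id')
next
  case (snoc k ws)
  then have k: "1 \<le> k" "k \<le> n" and IH: "NN n (wordfin n ws) \<le> length ws" by auto
  show ?case using NN_word_step[OF k, of ws] IH by (cases "lexneg (wordfin n ws (alpha n k))") auto
qed

lemma lexpos_scaled_eps: "c \<noteq> 0 \<Longrightarrow> lexpos (\<lambda>k. c * eps a k) \<longleftrightarrow> c > 0"
  using lex_first[of "\<lambda>k. c * eps a k" a] by (auto simp: eps_def)

lemma lexpos_scaled_eps_diff: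
  assumes "a \<noteq> b" "c = 1 \<or> c = -1" "lexpos ((\<lambda>k. c * eps a k) - eps b)"
  shows "c = 1 \<and> a < b"
proof (cases "a < b")
  case True
  then have "lexpos ((\<lambda>k. c * eps a k) - eps b) \<longleftrightarrow> c > 0"
    using lex_first[of "(\<lambda>k. c * eps a k) - eps b" a] assms(2) by (auto simp: eps_def)
  then show ?thesis using assms True by auto
next
  case False
  then have "b < a" using assms(1) by auto
  then have "lexneg ((\<lambda>k. c * eps a k) - eps b)"
    using lex_first[of "(\<lambda>k. c * eps a k) - eps b" b] by (auto simp: eps_def)
  then show ?thesis using assms(3) lex_not_both by blast
qed

lemma simple_pos_id:
  assumes sp: "SP n w \<tau> d" and lin: "\<And>x y. w (x - y) = w x - w y"
    and pos: "\<forall>k\<in>{1..n}. lexpos (w (alpha n k))"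
  shows "w = id"
proof -
  have we: "w (eps j) = (\<lambda>k. d j * eps (\<tau> j) k)" if "j \<in> {1..n}" for j using SP_eps[OF sp that] .
  have dpm: "d j = 1 \<or> d j = -1" for j using sp unfolding SP_def by blast
  have P: "d j = 1 \<and> (j < n \<longrightarrow> \<tau> j < \<tau> (j+1))" if "1 \<le> j" "j \<le> n" for j
    using that(2)
  proof (induction j rule: inc_induct)
    case base
    have "lexpos (w (alpha n n))" using pos that by auto
    then have "lexpos (w (eps n))" by (simp add: alpha_def)
    then have "d n > 0" using we[of n] that dpm[of n] lexpos_scaled_eps[of "d n" "\<tau> n"] by auto
    then show ?case using dpm[of n] by auto
  next
    case (step m)
    have m1: "1 \<le> m" using that step by auto
    have "d (Suc m) = 1" using step by auto
    then have e1: "w (eps (m+1)) = eps (\<tau> (m+1))" using we[of "m+1"] step by (auto simp: fun_eq_iff)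
    have "alpha n m = eps m - eps (m+1)" using step by (auto simp: alpha_def)
    moreover have "lexpos (w (alpha n m))" using pos step m1 by auto
    ultimately have "lexpos (w (eps m) - w (eps (m+1)))" using lin by simp
    then have "lexpos ((\<lambda>k. d m * eps (\<tau> m) k) - eps (\<tau> (m+1)))" using we[of m] e1 step m1 by auto
    moreover have "\<tau> m \<noteq> \<tau> (m+1)" using SP_inj[OF sp, of m "m+1"] step m1 by auto
    ultimately have "d m = 1 \<and> \<tau> m < \<tau> (m+1)" using lexpos_scaled_eps_diff dpm by blast
    then show ?case by auto
  qed
  have ge: "j \<le> \<tau> j" if "1 \<le> j" "j \<le> n" for j
    using that
  proof (induction j rule: dec_induct)
    case base then show ?case using SP_range[OF sp, of 1] by auto
  next
    case (step m)
    then show ?case using P[of m] by auto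
  qed
  have le: "\<tau> j \<le> j" if "1 \<le> j" "j \<le> n" for j
    using that(2)
  proof (induction j rule: inc_induct)
    case base then show ?case using SP_range[OF sp, of n] that by auto
  next
    case (step m)
    then show ?case using P[of m] that by auto
  qed
  show ?thesis
  proof
    fix x show "w x = id x"
    proof
      fix k show "w x k = id x k"
      proof (cases "k \<in> {1..n}")
        case True
        then have "\<tau> k = k" "d k = 1" using ge le P by (auto intro: antisym)
        then show ?thesis using sp True unfolding SP_def by (metis id_apply mult_1)
      next
        case False then show ?thesis using sp unfolding SP_def by simp
      qed
    qed
  qed
qed

lemma word_simple_pos_id:
  assumes "set ws \<subseteq> {1..n}" "\<forall>k\<in>{1..n}. \<not> lexneg (wordfin n ws (alpha n k))"
  shows "wordfin n ws = id"
proof -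
  obtain \<tau> d where sp: "SP n (wordfin n ws) \<tau> d" using SP_word[OF assms(1)] by blast
  have "\<forall>k\<in>{1..n}. lexpos (wordfin n ws (alpha n k))"
    using assms(2) word_alpha_nz lex_tri by fastforce
  then show ?thesis using simple_pos_id[OF sp] wordfin_diff by blast
qed

lemma descent:
  assumes "set ws \<subseteq> {1..n}" "NN n (wordfin n ws) > 0"
  shows "\<exists>k\<in>{1..n}. lexneg (wordfin n ws (alpha n k))"
  using word_simple_pos_id[OF assms(1)] assms(2) NN_id by fastforce

lemma word_of_NN:
  "set ws \<subseteq> {1..n} \<Longrightarrow> \<exists>ws'. set ws' \<subseteq> {1..n} \<and> length ws' = NN n (wordfin n ws) \<and> wordfin n ws' = wordfin n ws"
proof (induction "NN n (wordfin n ws)" arbitrary: ws)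
  case 0
  then have "\<forall>k\<in>{1..n}. \<not> lexneg (wordfin n ws (alpha n k))"
    using NN_pos by fastforce
  then have "wordfin n ws = id" using word_simple_pos_id 0 by blast
  then show ?case using 0 by (intro exI[of _ "[]"]) auto
next
  case (Suc m)
  obtain k where k: "k \<in> {1..n}" "lexneg (wordfin n ws (alpha n k))"
    using descent[OF Suc.prems] Suc.hyps(2) by auto
  have "NN n (wordfin n (ws @ [k])) + 1 = NN n (wordfin n ws)" using NN_word_step[of k n ws] k by auto
  then have m: "m = NN n (wordfin n (ws @ [k]))" using Suc.hyps(2) by simp
  have s: "set (ws @ [k]) \<subseteq> {1..n}" using Suc.prems k by auto
  obtain ws2 where ws2: "set ws2 \<subseteq> {1..n}" "length ws2 = m" "wordfin n ws2 = wordfin n (ws @ [k])"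
    using Suc.hyps(1)[OF m s] m by auto
  have "wordfin n (ws2 @ [k]) = wordfin n ws"
    using ws2(3) by (auto simp: wordfin_snoc fun_eq_iff)
  then show ?case using ws2 k Suc.hyps(2) by (intro exI[of _ "ws2 @ [k]"]) auto
qed

lemma lenW_eq: "set ws \<subseteq> {1..n} \<Longrightarrow> lenW n (wordfin n ws) = NN n (wordfin n ws)"
  unfolding lenW_def
proof (rule Least_equality)
  assume "set ws \<subseteq> {1..n}"
  then show "\<exists>ws'. length ws' = NN n (wordfin n ws) \<and> set ws' \<subseteq> {1..n} \<and> wordfin n ws' = wordfin n ws"
    using word_of_NN by blast
next
  fix y assume "\<exists>ws'. length ws' = y \<and> set ws' \<subseteq> {1..n} \<and> wordfin n ws' = wordfin n ws"
  then show "NN n (wordfin n ws) \<le> y" using NN_le_length by metis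
qed

lemma lenW_eq': "w \<in> Wfin n \<Longrightarrow> lenW n w = NN n w"
  unfolding Wfin_def using lenW_eq by blast

lemma NN_rev: assumes "set ws \<subseteq> {1..n}" shows "NN n (wordfin n (rev ws)) \<le> NN n (wordfin n ws)"
proof -
  obtain ws1 where ws1: "set ws1 \<subseteq> {1..n}" "length ws1 = NN n (wordfin n ws)" "wordfin n ws1 = wordfin n ws"
    using word_of_NN[OF assms] by blast
  have "wordfin n (rev ws1) = wordfin n (rev ws)"
  proof
    fix x
    have "wordfin n (rev ws1) x = wordfin n (rev ws1) (wordfin n ws1 (wordfin n (rev ws) x))"
      using ws1(3) wordfin_rev2 by metis
    also have "\<dots> = wordfin n (rev ws) x" by (simp add: wordfin_rev1)
    finally show "wordfin n (rev ws1) x = wordfin n (rev ws) x" .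
  qed
  then show ?thesis using NN_le_length[of "rev ws1" n] ws1 by auto
qed

lemma NN_rev_eq: "set ws \<subseteq> {1..n} \<Longrightarrow> NN n (wordfin n (rev ws)) = NN n (wordfin n ws)"
  using NN_rev[of ws n] NN_rev[of "rev ws" n] by auto

lemma sfin_one: "1 \<le> i \<Longrightarrow> i < n \<Longrightarrow> sfin n i (one n) = one n"
  by (auto simp: sfin_lt one_def sw_def fun_eq_iff)

lemma WP_one: "set ws \<subseteq> {1..n-1} \<Longrightarrow> wordfin n ws (one n) = one n"
  by (induction ws) (auto simp: sfin_one)

lemma SP_d1: "SP n (wordfin n ws) \<tau> d \<Longrightarrow> wordfin n ws (one n) = one n \<Longrightarrow> j \<in> {1..n} \<Longrightarrow> d j = 1"
  using SP_one[of n "wordfin n ws" \<tau> d j] SP_range[of n "wordfin n ws" \<tau> d j] by (auto simp: one_def)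

lemma WP_char:
  "set ws \<subseteq> {1..n} \<Longrightarrow> wordfin n ws (one n) = one n \<Longrightarrow> wordfin n ws \<in> WP n"
proof (induction "NN n (wordfin n ws)" arbitrary: ws)
  case 0
  then have "\<forall>k\<in>{1..n}. \<not> lexneg (wordfin n ws (alpha n k))"
    using NN_pos by fastforce
  then have "wordfin n ws = id" using word_simple_pos_id 0 by blast
  then have "wordfin n ws = wordfin n []" by simp
  moreover have "set [] \<subseteq> {1..n-1}" by simp
  ultimately show ?case unfolding WP_def by blast
next
  case (Suc m)
  obtain k where k: "k \<in> {1..n}" "lexneg (wordfin n ws (alpha n k))"
    using descent[OF Suc.prems(1)] Suc.hyps(2) by auto
  obtain \<tau> d where sp: "SP n (wordfin n ws) \<tau> d" using SP_word[OF Suc.prems(1)] by blast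
  have kn: "k \<noteq> n"
  proof
    assume "k = n"
    then have "wordfin n ws (alpha n k) = (\<lambda>j. d n * eps (\<tau> n) j)"
      using SP_eps[OF sp, of n] k by (simp add: alpha_def)
    also have "\<dots> = eps (\<tau> n)" using SP_d1[OF sp Suc.prems(2), of n] k \<open>k = n\<close> by simp
    finally have "lexpos (wordfin n ws (alpha n k))" using lexpos_eps by simp
    then show False using k(2) lex_not_both by blast
  qed
  have "NN n (wordfin n (ws @ [k])) + 1 = NN n (wordfin n ws)" using NN_word_step[of k n ws] k by auto
  then have m: "m = NN n (wordfin n (ws @ [k]))" using Suc.hyps(2) by simp
  have s: "set (ws @ [k]) \<subseteq> {1..n}" using Suc.prems k by auto
  have o: "wordfin n (ws @ [k]) (one n) = one n"
    using Suc.prems(2) sfin_one[of k n] k kn by (simp add: wordfin_snoc)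
  have "wordfin n (ws @ [k]) \<in> WP n" using Suc.hyps(1)[OF m s o] .
  then obtain ws3 where ws3: "set ws3 \<subseteq> {1..n-1}" "wordfin n ws3 = wordfin n (ws @ [k])"
    unfolding WP_def by auto
  have e: "wordfin n (ws3 @ [k]) = wordfin n ws"
    using ws3(2) by (auto simp: wordfin_snoc fun_eq_iff)
  have s3: "set (ws3 @ [k]) \<subseteq> {1..n-1}" using ws3 k kn by auto
  show ?case unfolding WP_def mem_Collect_eq
    by (rule exI[of _ "ws3 @ [k]"]) (use e s3 in simp)
qed

lemma lexpos_sum_alpha:
  assumes lin: "\<And>x y. w (x + y) = w x + w y"
    and pos: "\<forall>k. 1 \<le> k \<and> k < n \<longrightarrow> lexpos (w (alpha n k))"
    and ab: "1 \<le> a" "a < b" "b \<le> n"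
  shows "lexpos (w (eps a - eps b))"
proof -
  have "\<forall>m. Suc a \<le> m \<longrightarrow> m \<le> n \<longrightarrow> lexpos (w (eps a - eps m))"
  proof (intro allI)
    fix m show "Suc a \<le> m \<longrightarrow> m \<le> n \<longrightarrow> lexpos (w (eps a - eps m))"
    proof (induction m)
      case 0 then show ?case by simp
    next
      case (Suc m)
      show ?case
      proof (intro impI)
        assume m: "Suc a \<le> Suc m" "Suc m \<le> n"
        show "lexpos (w (eps a - eps (Suc m)))"
        proof (cases "m = a")
          case True
          have h1: "alpha n a = eps a - eps (Suc a)" using ab by (auto simp: alpha_def)
          have h2: "lexpos (w (alpha n a))" using pos ab by auto
          show ?thesis using h1 h2 True by metis
        next
          case False
          then have "Suc a \<le> m" "m \<le> n" using m by auto
          then have h3: "lexpos (w (eps a - eps m))" using Suc.IH by blast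
          have eq: "eps a - eps (Suc m) = (eps a - eps m) + (eps m - eps (Suc m))" by (simp add: fun_eq_iff)
          have weq: "w (eps a - eps (Suc m)) = w (eps a - eps m) + w (eps m - eps (Suc m))"
            using lin eq by metis
          have h1: "alpha n m = eps m - eps (Suc m)" using m by (auto simp: alpha_def)
          have h2: "lexpos (w (alpha n m))" using pos m ab \<open>Suc a \<le> m\<close> by auto
          show ?thesis using lexpos_add[OF h3] h1 h2 weq by metis
        qed
      qed
    qed
  qed
  then show ?thesis using ab by auto
qed

lemma coset_add:
  assumes ys: "set ys \<subseteq> {1..n}"
    and asc: "\<forall>k. 1 \<le> k \<and> k < n \<longrightarrow> \<not> lexneg (wordfin n ys (alpha n k))"
  shows "set ws \<subseteq> {1..n-1} \<Longrightarrow> NN n (wordfin n ys \<circ> wordfin n ws) = NN n (wordfin n ys) + NN n (wordfin n ws)"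
proof (induction ws rule: rev_induct)
  case Nil then show ?case by (simp add: NN_id NN_id')
next
  case (snoc k ws)
  let ?y = "wordfin n ys" let ?p = "wordfin n ws"
  have k: "1 \<le> k" "k < n" and wsn: "set ws \<subseteq> {1..n-1}" using snoc.prems by auto
  have ws: "set ws \<subseteq> {1..n}" by (rule order_trans[OF wsn]) auto
  have IH: "NN n (?y \<circ> ?p) = NN n ?y + NN n ?p" using snoc.IH wsn by (simp add: comp_def)
  obtain \<tau> d where sp: "SP n ?p \<tau> d" and d1: "\<forall>j. d j = 1" using SP_word[OF ws] wsn by blast
  have pe: "?p (eps j) = eps (\<tau> j)" if "j \<in> {1..n}" for j
    using SP_eps[OF sp that] d1 by simp
  define a where "a = \<tau> k" define b where "b = \<tau> (Suc k)"
  have ab: "a \<in> {1..n}" "b \<in> {1..n}" "a \<noteq> b"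
    using SP_range[OF sp] SP_inj[OF sp, of k "Suc k"] k unfolding a_def b_def by auto
  have pa: "?p (alpha n k) = eps a - eps b"
    using k pe[of k] pe[of "Suc k"] wordfin_diff unfolding a_def b_def by (simp add: alpha_def)
  have ypos: "lexpos (?y (alpha n j))" if "1 \<le> j" "j < n" for j
    using asc that word_alpha_nz[of j n ys] lex_tri by fastforce
  have lin: "\<And>x y. ?y (x + y) = ?y x + ?y y" by (rule wordfin_add)
  have comb: "wordfin n (ys @ ws) = ?y \<circ> ?p" by (rule wordfin_append)
  have wk: "wordfin n (ws @ [k]) = ?p \<circ> sfin n k" by (rule wordfin_snoc)
  have as: "?y \<circ> (?p \<circ> sfin n k) = (?y \<circ> ?p) \<circ> sfin n k" by (simp add: comp_assoc)
  have nz: "(?y \<circ> ?p) (alpha n k) \<noteq> 0" using word_alpha_nz[of k n "ys @ ws"] k by (simp add: wordfin_append)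
  have s1: "(lexneg ((?y \<circ> ?p) (alpha n k)) \<longrightarrow> NN n ((?y \<circ> ?p) \<circ> sfin n k) + 1 = NN n (?y \<circ> ?p))
       \<and> (\<not> lexneg ((?y \<circ> ?p) (alpha n k)) \<longrightarrow> NN n ((?y \<circ> ?p) \<circ> sfin n k) = NN n (?y \<circ> ?p) + 1)"
    by (rule NN_step) (use k nz in \<open>auto simp: wordfin_uminus\<close>)
  have s2: "(lexneg (?p (alpha n k)) \<longrightarrow> NN n (?p \<circ> sfin n k) + 1 = NN n ?p)
       \<and> (\<not> lexneg (?p (alpha n k)) \<longrightarrow> NN n (?p \<circ> sfin n k) = NN n ?p + 1)"
    using NN_word_step[of k n ws] k by (simp add: wordfin_snoc)
  have e: "(?y \<circ> ?p) (alpha n k) = ?y (eps a - eps b)" using pa by simp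
  have g: "NN n (?y \<circ> wordfin n (ws @ [k])) = NN n ((?y \<circ> ?p) \<circ> sfin n k)" by (simp only: wk as)
  have g2: "NN n (wordfin n (ws @ [k])) = NN n (?p \<circ> sfin n k)" by (simp only: wk)
  show ?case
  proof (cases "a < b")
    case True
    have "lexpos (?y (eps a - eps b))"
      using lexpos_sum_alpha[of ?y n a b, OF lin] ypos ab True by auto
    then have n1: "\<not> lexneg ((?y \<circ> ?p) (alpha n k))" using e lex_not_both by metis
    have n2: "\<not> lexneg (?p (alpha n k))" using pa lexpos_eps_diff[OF True] lex_not_both by metis
    have t1: "NN n ((?y \<circ> ?p) \<circ> sfin n k) = NN n (?y \<circ> ?p) + 1" using s1 n1 by blast
    have t2: "NN n (?p \<circ> sfin n k) = NN n ?p + 1" using s2 n2 by blast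
    show ?thesis using t1 t2 IH g g2 by linarith
  next
    case False
    then have ba: "b < a" using ab by auto
    have "lexpos (?y (eps b - eps a))"
      using lexpos_sum_alpha[of ?y n b a, OF lin] ypos ab ba by auto
    moreover have "?y (eps a - eps b) = - ?y (eps b - eps a)"
      using wordfin_uminus[of n ys "eps b - eps a"] by simp
    ultimately have n1: "lexneg ((?y \<circ> ?p) (alpha n k))" using e by simp
    have "eps a - eps b = - (eps b - eps a)" by simp
    then have "lexneg (eps a - eps b)" by (metis lexneg_uminus lexpos_eps_diff[OF ba])
    then have n2: "lexneg (?p (alpha n k))" using pa by simp
    have t1: "NN n ((?y \<circ> ?p) \<circ> sfin n k) + 1 = NN n (?y \<circ> ?p)" using s1 n1 by blast
    have t2: "NN n (?p \<circ> sfin n k) + 1 = NN n ?p" using s2 n2 by blast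
    show ?thesis using t1 t2 IH g g2 by linarith
  qed
qed

lemma eps_inj: "eps a = eps b \<Longrightarrow> a = b"
  by (metis eps_def zero_neq_one)

lemma eps_pair_inj:
  assumes "k < b" "k' < b'" "(c::int) \<noteq> 0" "c' \<noteq> 0"
    "(\<lambda>j. eps k j + c * eps b j) = (\<lambda>j. eps k' j + c' * eps b' j)"
  shows "k = k' \<and> b = b'"
proof -
  have h: "eps k j + c * eps b j = eps k' j + c' * eps b' j" for j using assms(5) by metis
  have hk: "1 + c * eps b k = eps k' k + c' * eps b' k" using h[of k] by (simp add: eps_def)
  have "k = k'"
  proof (rule ccontr)
    assume ne: "k \<noteq> k'"
    have a: "eps k' k = 0" using ne by (simp add: eps_def)
    have b0: "eps b k = 0" using assms(1) by (simp add: eps_def)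
    have "c' * eps b' k = 1" using hk a b0 by simp
    then have kb: "b' = k" by (auto simp: eps_def split: if_splits)
    have "eps k k' + c * eps b k' = 1" using h[of k'] assms(2) by (simp add: eps_def)
    then have "b = k'" using ne by (auto simp: eps_def split: if_splits)
    then show False using kb assms(1,2) by simp
  qed
  moreover have "b = b'"
  proof (rule ccontr)
    assume ne: "b \<noteq> b'"
    have "c * eps b b = eps k' b + c' * eps b' b" using h[of b] assms(1) by (simp add: eps_def)
    then have "c = 0" using ne assms(1) \<open>k = k'\<close> by (simp add: eps_def)
    then show False using assms(3) by simp
  qed
  ultimately show ?thesis by simp
qed

lemma lower_bound:
  assumes zs: "set zs \<subseteq> {1..n}" and S: "S \<subseteq> {1..n}"
    and neg: "\<forall>k\<in>S. lexneg (wordfin n zs (eps k))"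
  shows "card S + (\<Sum>k\<in>S. n - k) \<le> NN n (wordfin n zs)"
proof -
  let ?z = "wordfin n zs"
  define Pairs where "Pairs = Sigma S (\<lambda>k. {k<..n})"
  define F where "F = (\<lambda>(k,b). if lexneg (?z (eps k + eps b)) then eps k + eps b else eps k - eps b)"
  define T where "T = eps ` S \<union> F ` Pairs"
  have finS: "finite S" using S finite_subset by blast
  have finP: "finite Pairs" unfolding Pairs_def using finS by auto
  have Fform: "F (k,b) = (\<lambda>j. eps k j + (if lexneg (?z (eps k + eps b)) then 1 else -1) * eps b j)" for k b
    unfolding F_def by (auto simp: fun_eq_iff)
  have TB: "T \<subseteq> {\<beta> \<in> PhiP n. lexneg (?z \<beta>)}"
  proof
    fix \<beta> assume "\<beta> \<in> T"
    then consider (e) k where "k \<in> S" "\<beta> = eps k" | (f) k b where "k \<in> S" "k < b" "b \<le> n" "\<beta> = F (k,b)"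
      unfolding T_def Pairs_def by auto
    then show "\<beta> \<in> {\<beta> \<in> PhiP n. lexneg (?z \<beta>)}"
    proof cases
      case e
      have "1 \<le> k" "k \<le> n" using e S by auto
      then have "\<beta> \<in> PhiP n" unfolding PhiP_def using e by blast
      then show ?thesis using neg e by auto
    next
      case f
      have k1: "1 \<le> k" using f S by auto
      have inP: "eps k + eps b \<in> PhiP n" "eps k - eps b \<in> PhiP n"
        unfolding PhiP_def using f k1 by blast+
      have "lexneg (?z (eps k) + ?z (eps k))" using neg f lexneg_add by blast
      moreover have "?z (eps k) + ?z (eps k) = ?z (eps k + eps b) + ?z (eps k - eps b)"
      proof -
        have "eps k + eps k = (eps k + eps b) + (eps k - eps b)" by simp
        then show ?thesis by (metis wordfin_add)
      qed
      ultimately have "lexneg (?z (eps k + eps b)) \<or> lexneg (?z (eps k - eps b))"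
        using lexneg_add_split by metis
      then show ?thesis using f inP unfolding F_def by auto
    qed
  qed
  have injF: "inj_on F Pairs"
  proof (rule inj_onI)
    fix p q assume "p \<in> Pairs" "q \<in> Pairs" "F p = F q"
    then obtain k b k' b' where h: "p = (k,b)" "q = (k',b')" "k < b" "k' < b'"
      "F (k,b) = F (k',b')" unfolding Pairs_def by auto
    define c where "c = (if lexneg (?z (eps k + eps b)) then 1 else (-1::int))"
    define c' where "c' = (if lexneg (?z (eps k' + eps b')) then 1 else (-1::int))"
    have "(\<lambda>j. eps k j + c * eps b j) = (\<lambda>j. eps k' j + c' * eps b' j)"
      using h(5) unfolding Fform c_def c'_def .
    moreover have "c \<noteq> 0" "c' \<noteq> 0" unfolding c_def c'_def by auto
    ultimately have "k = k' \<and> b = b'" using eps_pair_inj h(3,4) by blast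
    then show "p = q" using h by simp
  qed
  have disj: "eps ` S \<inter> F ` Pairs = {}"
  proof -
    have "eps a \<noteq> F (k,b)" if "k < b" for a k b
    proof
      assume h: "eps a = F (k,b)"
      have "eps a b = F (k,b) b" "eps a k = F (k,b) k" using h by auto
      then show False using that by (auto simp: Fform eps_def split: if_splits)
    qed
    then show ?thesis unfolding Pairs_def by auto
  qed
  have "card T = card (eps ` S) + card (F ` Pairs)"
    unfolding T_def using finS finP disj by (simp add: card_Un_disjoint)
  also have "\<dots> = card S + card Pairs"
    using card_image[OF injF] card_image[of eps S] eps_inj by (auto simp: inj_on_def)
  also have "card Pairs = (\<Sum>k\<in>S. n - k)"
    unfolding Pairs_def using finS by (simp add: card_SigmaI)
  finally have "card T = card S + (\<Sum>k\<in>S. n - k)" .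
  moreover have "card T \<le> NN n ?z"
    unfolding NN_def using TB finite_PhiP by (intro card_mono) auto
  ultimately show ?thesis by simp
qed

lemma lattice_aux:
  assumes "1 \<le> k" "k \<le> n + 1"
  shows "\<forall>\<xi>. (\<forall>j. \<xi> j \<noteq> 0 \<longrightarrow> k \<le> j \<and> j \<le> n) \<longrightarrow> \<xi> \<in> coroot_lattice n"
  using assms(2)
proof (induction k rule: inc_induct)
  case base
  show ?case
  proof (intro allI impI)
    fix \<xi> :: vec assume "\<forall>j. \<xi> j \<noteq> 0 \<longrightarrow> n + 1 \<le> j \<and> j \<le> n"
    then have "\<xi> = (\<lambda>_. 0)" by force
    then show "\<xi> \<in> coroot_lattice n" using coroot_lattice.zero by simp
  qed
next
  case (step m)
  show ?case
  proof (intro allI impI)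
    fix \<xi> :: vec assume supp: "\<forall>j. \<xi> j \<noteq> 0 \<longrightarrow> m \<le> j \<and> j \<le> n"
    show "\<xi> \<in> coroot_lattice n"
    proof (cases "m = n")
      case True
      define \<xi>' where "\<xi>' = (\<lambda>j. \<xi> j - \<xi> n * eps n j)"
      have "\<forall>j. \<xi>' j \<noteq> 0 \<longrightarrow> Suc m \<le> j \<and> j \<le> n"
        using supp True unfolding \<xi>'_def eps_def by (auto simp: le_less)
      then have "\<xi>' \<in> coroot_lattice n" using step.IH by blast
      then have "(\<lambda>j. \<xi>' j + \<xi> n * eps n j) \<in> coroot_lattice n" by (rule coroot_lattice.long)
      moreover have "(\<lambda>j. \<xi>' j + \<xi> n * eps n j) = \<xi>" unfolding \<xi>'_def by simp
      ultimately show ?thesis by simp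
    next
      case False
      then have mn: "m < n" using step by auto
      define \<xi>' where "\<xi>' = (\<lambda>j. \<xi> j - \<xi> m * (eps m j - eps (m+1) j))"
      have "\<forall>j. \<xi>' j \<noteq> 0 \<longrightarrow> Suc m \<le> j \<and> j \<le> n"
        using supp mn unfolding \<xi>'_def eps_def by (auto simp: le_less)
      then have "\<xi>' \<in> coroot_lattice n" using step.IH by blast
      moreover have "1 \<le> m" using assms(1) step by simp
      ultimately have "(\<lambda>j. \<xi>' j + \<xi> m * (eps m j - eps (m+1) j)) \<in> coroot_lattice n"
        using coroot_lattice.simple[of m n \<xi>' "\<xi> m"] mn by simp
      moreover have "(\<lambda>j. \<xi>' j + \<xi> m * (eps m j - eps (m+1) j)) = \<xi>" unfolding \<xi>'_def by simp
      ultimately show ?thesis by simp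
    qed
  qed
qed

lemma supp_lattice: assumes "1 \<le> n" "supp_ok n \<xi>" shows "\<xi> \<in> coroot_lattice n"
proof -
  have "\<forall>j. \<xi> j \<noteq> 0 \<longrightarrow> 1 \<le> j \<and> j \<le> n" using assms(2) unfolding supp_ok_def by blast
  then show ?thesis using lattice_aux[of 1 n] by simp
qed

lemma wordfin_up:
  assumes "1 \<le> a" "a \<le> b" "b \<le> n"
  shows "wordfin n [a..<b] y t = (if t = a then y b else if a < t \<and> t \<le> b then y (t - 1) else y t)"
proof -
  have "\<forall>a t. b - a = d \<longrightarrow> 1 \<le> a \<longrightarrow> a \<le> b \<longrightarrow> wordfin n [a..<b] y t = (if t = a then y b else if a < t \<and> t \<le> b then y (t - 1) else y t)" for d
  proof (induction d)
    case 0 then show ?case by simp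
  next
    case (Suc d)
    show ?case
    proof (intro allI impI)
      fix a t assume h: "b - a = Suc d" "1 \<le> a" "a \<le> b"
      then have ab: "a < b" "a \<noteq> n" using assms by auto
      have l: "[a..<b] = a # [Suc a..<b]" using ab by (simp add: upt_conv_Cons)
      have IH: "wordfin n [Suc a..<b] y s = (if s = Suc a then y b else if Suc a < s \<and> s \<le> b then y (s - 1) else y s)" for s
        using Suc.IH h ab by auto
      show "wordfin n [a..<b] y t = (if t = a then y b else if a < t \<and> t \<le> b then y (t - 1) else y t)"
        unfolding l using ab by (auto simp: sfin_lt sw_def IH)
    qed
  qed
  then show ?thesis using assms by blast
qed

lemma wordfin_down:
  assumes "1 \<le> a" "a \<le> b" "b \<le> n"
  shows "wordfin n (rev [a..<b]) y t = (if t = b then y a else if a \<le> t \<and> t < b then y (t + 1) else y t)"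
proof -
  have "\<forall>t. b \<le> n \<longrightarrow> wordfin n (rev [a..<b]) y t = (if t = b then y a else if a \<le> t \<and> t < b then y (t + 1) else y t)"
    using assms(2)
  proof (induction b rule: dec_induct)
    case base then show ?case by simp
  next
    case (step m)
    show ?case
    proof (intro allI impI)
      fix t assume mn: "Suc m \<le> n"
      have IH: "wordfin n (rev [a..<m]) y s = (if s = m then y a else if a \<le> s \<and> s < m then y (s + 1) else y s)" for s
        using step mn by auto
      have bn: "m \<noteq> n" using mn by auto
      show "wordfin n (rev [a..<Suc m]) y t = (if t = Suc m then y a else if a \<le> t \<and> t < Suc m then y (t + 1) else y t)"
        using step(1) bn by (auto simp: sfin_lt sw_def IH)
    qed
  qed
  then show ?thesis using assms by blast
qed

lemma s_theta_formula:
  assumes "1 \<le> n"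
  shows "s_theta n y = y(1 := - y 1)"
proof
  fix t
  define Z where "Z = wordfin n (rev [1..<n]) y"
  define Z' where "Z' = sfin n n Z"
  have z: "Z s = (if s = n then y 1 else if 1 \<le> s \<and> s < n then y (s + 1) else y s)" for s
    unfolding Z_def by (rule wordfin_down[OF order_refl assms order_refl])
  have z': "Z' s = (if s = n then - y 1 else Z s)" for s
    unfolding Z'_def using z[of n] by (cases "s = n") (simp_all add: sfin_n)
  have "s_theta n y t = wordfin n [1..<n] Z' t"
    unfolding Z'_def Z_def s_theta_def wordfin_append by simp
  also have "\<dots> = (if t = 1 then Z' n else if 1 < t \<and> t \<le> n then Z' (t - 1) else Z' t)"
    by (rule wordfin_up[OF order_refl assms order_refl])
  also have "\<dots> = (y(1 := - y 1)) t"
    using assms by (auto simp: z' z)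
  finally show "s_theta n y t = (y(1 := - y 1)) t" .
qed

definition thw :: "nat \<Rightarrow> nat list" where "thw n = [1..<n] @ [n] @ rev [1..<n]"
definition Rw :: "nat \<Rightarrow> nat \<Rightarrow> nat list" where "Rw n i = rev [1..<i] @ thw n"

lemma s_theta_word: "s_theta n = wordfin n (thw n)" by (simp add: s_theta_def thw_def)

lemma set_thw: "1 \<le> n \<Longrightarrow> set (thw n) \<subseteq> {1..n}" by (auto simp: thw_def)
lemma set_Rw: "1 \<le> i \<Longrightarrow> i \<le> n \<Longrightarrow> set (Rw n i) \<subseteq> {1..n}" using set_thw[of n] by (auto simp: Rw_def)

lemma R_formula:
  assumes "1 \<le> i" "i \<le> n"
  shows "wordfin n (Rw n i) y t = (if t = i then - y 1 else if 1 \<le> t \<and> t < i then y (t + 1) else y t)"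
proof -
  have n1: "1 \<le> n" using assms by simp
  have th: "wordfin n (thw n) y = y(1 := - y 1)" using s_theta_formula[OF n1] s_theta_word by metis
  have "wordfin n (Rw n i) y t = wordfin n (rev [1..<i]) (y(1 := - y 1)) t"
    unfolding Rw_def wordfin_append comp_apply th ..
  also have "\<dots> = (if t = i then - y 1 else if 1 \<le> t \<and> t < i then y (t + 1) else y t)"
    using wordfin_down[OF order_refl assms, of "y(1 := - y 1)" t] assms by auto
  finally show ?thesis .
qed

lemma U_formula:
  assumes "1 \<le> m" "m \<le> n"
  shows "wordfin n [m..<n+1] y t = (if t = m then - y n else if m < t \<and> t \<le> n then y (t - 1) else y t)"
proof -
  have l: "[m..<n+1] = [m..<n] @ [n]" using assms by simp
  let ?z = "sfin n n y"
  have "wordfin n [m..<n+1] y t = wordfin n [m..<n] ?z t" unfolding l wordfin_append by simp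
  also have "\<dots> = (if t = m then ?z n else if m < t \<and> t \<le> n then ?z (t - 1) else ?z t)"
    by (rule wordfin_up[OF assms order_refl])
  also have "\<dots> = (if t = m then - y n else if m < t \<and> t \<le> n then y (t - 1) else y t)"
  proof -
    have sn: "sfin n n y s = (if s = n then - y n else y s)" for s by (simp add: sfin_n)
    show ?thesis using assms by (auto simp: sn)
  qed
  finally show ?thesis .
qed

lemma trans_eq: "trans \<xi> x = x + \<xi>" by (simp add: trans_def fun_eq_iff)

definition aff :: "elt \<Rightarrow> elt \<Rightarrow> bool" where
  "aff f L \<longleftrightarrow> (\<forall>x y. L (x + y) = L x + L y) \<and> (\<forall>x. f x = L x + f 0)"

lemma aff_comp:
  assumes "aff f1 L1" "aff f2 L2" shows "aff (f1 \<circ> f2) (L1 \<circ> L2)"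
proof -
  have a11: "L1 (x+y) = L1 x + L1 y" for x y using assms(1) unfolding aff_def by blast
  have a12: "f1 x = L1 x + f1 0" for x using assms(1) unfolding aff_def by blast
  have a21: "L2 (x+y) = L2 x + L2 y" for x y using assms(2) unfolding aff_def by blast
  have a22: "f2 x = L2 x + f2 0" for x using assms(2) unfolding aff_def by blast
  show ?thesis unfolding aff_def
  proof (intro conjI allI)
    fix x y show "(L1 \<circ> L2) (x + y) = (L1 \<circ> L2) x + (L1 \<circ> L2) y" by (simp add: a11 a21)
  next
    fix x
    have "(f1 \<circ> f2) x = L1 (f2 x) + f1 0" using a12[of "f2 x"] by simp
    also have "\<dots> = L1 (L2 x + f2 0) + f1 0" using a22[of x] by simp
    also have "\<dots> = L1 (L2 x) + (L1 (f2 0) + f1 0)" using a11[of "L2 x" "f2 0"] by (simp add: add.assoc)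
    finally have e1: "(f1 \<circ> f2) x = L1 (L2 x) + (L1 (f2 0) + f1 0)" .
    have e2: "(f1 \<circ> f2) 0 = L1 (f2 0) + f1 0" using a12[of "f2 0"] by simp
    show "(f1 \<circ> f2) x = (L1 \<circ> L2) x + (f1 \<circ> f2) 0" unfolding e1 e2 by simp
  qed
qed

lemma aff_word: "aff (wordfin n ws) (wordfin n ws)"
  unfolding aff_def by (simp add: wordfin_add wordfin_zero)

lemma aff_s0: "aff (s0 n) (s_theta n)"
proof -
  have th: "s_theta n (x + y) = s_theta n x + s_theta n y" for x y
    by (simp add: s_theta_word wordfin_add)
  have e: "s0 n x = s_theta n x + s0 n 0" for x
    unfolding s0_def comp_apply trans_eq by (simp add: th)
  show ?thesis unfolding aff_def using th e by blast
qed

lemma wordaff_Nil[simp]: "wordaff n [] = id" by (simp add: wordaff_def)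
lemma wordaff_Cons[simp]: "wordaff n (i # ws) = saff n i \<circ> wordaff n ws" by (simp add: wordaff_def)
lemma wordaff_append: "wordaff n (xs @ ys) = wordaff n xs \<circ> wordaff n ys"
  by (induction xs) auto
lemma wordaff_fin: "0 \<notin> set ws \<Longrightarrow> wordaff n ws = wordfin n ws"
  by (induction ws) (auto simp: saff_def)

lemma rho_eq: assumes "1 \<le> i" shows "rho n i = wordfin n (rev [1..<i]) \<circ> s0 n"
proof -
  have "[0..<i] = 0 # [1..<i]" using assms by (simp add: upt_conv_Cons)
  then have "rev [0..<i] = rev [1..<i] @ [0]" by simp
  then show ?thesis unfolding rho_def by (simp add: wordaff_append wordaff_fin saff_def)
qed

lemma aff_rho: assumes "1 \<le> i" shows "aff (rho n i) (wordfin n (Rw n i))"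
proof -
  have "wordfin n (Rw n i) = wordfin n (rev [1..<i]) \<circ> s_theta n"
    by (simp add: Rw_def wordfin_append s_theta_word)
  then show ?thesis using aff_comp[OF aff_word aff_s0] rho_eq[OF assms] by metis
qed

fun Vw :: "nat \<Rightarrow> nat list \<Rightarrow> nat list" where
  "Vw n [] = []" | "Vw n (m # l) = Vw n l @ Rw n m"

lemma foldr_comp: "foldr (\<circ>) fs g = foldr (\<circ>) fs id \<circ> g"
  by (induction fs) (auto simp: comp_assoc)

lemma x_lam_Nil: "x_lam n [] = id" by (simp add: x_lam_def)
lemma x_lam_Cons: "x_lam n (m # l) = x_lam n l \<circ> rho n m"
  unfolding x_lam_def by (simp add: foldr_comp[of _ "rho n m"])

lemma aff_x_lam: "set l \<subseteq> {1..n} \<Longrightarrow> aff (x_lam n l) (wordfin n (Vw n l))"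
proof (induction l)
  case Nil
  have "aff (wordfin n []) (wordfin n [])" by (rule aff_word)
  then show ?case by (simp only: x_lam_Nil Vw.simps wordfin_Nil)
next
  case (Cons m l)
  then have "aff (x_lam n l \<circ> rho n m) (wordfin n (Vw n l) \<circ> wordfin n (Rw n m))"
    by (intro aff_comp aff_rho) auto
  then show ?case by (simp only: x_lam_Cons Vw.simps wordfin_append)
qed

lemma set_Vw: "set l \<subseteq> {1..n} \<Longrightarrow> set (Vw n l) \<subseteq> {1..n}"
  by (induction l) (use set_Rw in auto)

lemma supp_s0: assumes "1 \<le> n" "supp_ok n x" shows "supp_ok n (s0 n x)"
proof -
  have "supp_ok n (x + (\<lambda>j. - eps 1 j))" using assms unfolding supp_ok_def eps_def by auto
  then show ?thesis unfolding s0_def comp_apply trans_eq s_theta_word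
    using wordfin_supp set_thw assms(1) by blast
qed

lemma supp_x_lam: "set l \<subseteq> {1..n} \<Longrightarrow> 1 \<le> n \<Longrightarrow> supp_ok n x \<Longrightarrow> supp_ok n (x_lam n l x)"
proof (induction l arbitrary: x)
  case Nil then show ?case by (simp add: x_lam_Nil)
next
  case (Cons m l)
  have m: "1 \<le> m" "m \<le> n" using Cons.prems by auto
  have sr: "set (rev [1..<m]) \<subseteq> {1..n}" using m by auto
  have "supp_ok n (rho n m x)" unfolding rho_eq[OF m(1)] comp_apply
    using supp_s0[OF Cons.prems(2,3)] wordfin_supp[OF sr] by blast
  then show ?case using Cons by (simp add: x_lam_Cons)
qed

lemma v_lam_eq:
  assumes n1: "1 \<le> n" and l: "set l \<subseteq> {1..n}"
  shows "v_lam n l = wordfin n (Vw n l)"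
  unfolding v_lam_def
proof (rule the_equality)
  let ?V = "wordfin n (Vw n l)" let ?c = "x_lam n l 0"
  have sV: "set (Vw n l) \<subseteq> {1..n}" using set_Vw[OF l] .
  have af0: "\<forall>x. x_lam n l x = ?V x + ?c" using aff_x_lam[OF l] unfolding aff_def by (rule conjunct2)
  have af: "x_lam n l x = ?V x + ?c" for x using af0 by (rule spec)
  define \<xi> where "\<xi> = - wordfin n (rev (Vw n l)) ?c"
  have "supp_ok n 0" by (simp add: supp_ok_def)
  then have sc: "supp_ok n ?c" by (rule supp_x_lam[OF l n1])
  have "supp_ok n (wordfin n (rev (Vw n l)) ?c)" by (rule wordfin_supp) (use sV sc in auto)
  then have "supp_ok n \<xi>" unfolding \<xi>_def supp_ok_def by simp
  then have \<xi>Q: "\<xi> \<in> coroot_lattice n" by (rule supp_lattice[OF n1])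
  have e: "(\<lambda>j. - \<xi> j) = wordfin n (rev (Vw n l)) ?c" unfolding \<xi>_def by (simp add: fun_eq_iff)
  have "x_lam n l = ?V \<circ> trans (\<lambda>j. - \<xi> j)"
  proof
    fix x
    have "(?V \<circ> trans (\<lambda>j. - \<xi> j)) x = ?V (x + wordfin n (rev (Vw n l)) ?c)"
      by (simp only: comp_apply trans_eq e)
    also have "\<dots> = ?V x + ?V (wordfin n (rev (Vw n l)) ?c)" by (rule wordfin_add)
    also have "\<dots> = ?V x + ?c" by (simp only: wordfin_rev2)
    finally show "x_lam n l x = (?V \<circ> trans (\<lambda>j. - \<xi> j)) x" using af[of x] by simp
  qed
  moreover have "?V \<in> Wfin n" unfolding Wfin_def mem_Collect_eq
    by (rule exI[of _ "Vw n l"]) (use sV in simp)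
  ultimately show "?V \<in> Wfin n \<and> (\<exists>\<xi>\<in>coroot_lattice n. x_lam n l = ?V \<circ> trans (\<lambda>j. - \<xi> j))"
    using \<xi>Q by (intro conjI bexI[of _ \<xi>]) auto
next
  let ?V = "wordfin n (Vw n l)" let ?c = "x_lam n l 0"
  have af0: "\<forall>x. x_lam n l x = ?V x + ?c" using aff_x_lam[OF l] unfolding aff_def by (rule conjunct2)
  have af: "x_lam n l x = ?V x + ?c" for x using af0 by (rule spec)
  fix v assume h: "v \<in> Wfin n \<and> (\<exists>\<xi>\<in>coroot_lattice n. x_lam n l = v \<circ> trans (\<lambda>j. - \<xi> j))"
  then have "v \<in> Wfin n" by (rule conjunct1)
  then obtain ws where v: "v = wordfin n ws" unfolding Wfin_def by auto
  obtain \<xi> where x: "x_lam n l = v \<circ> trans (\<lambda>j. - \<xi> j)" using h by auto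
  let ?\<eta> = "(\<lambda>j. - \<xi> j)"
  have xv: "x_lam n l x = v x + v ?\<eta>" for x using x v by (simp add: trans_eq wordfin_add)
  have "?c = v ?\<eta>" using xv[of 0] v by (simp add: wordfin_zero)
  show "v = ?V"
  proof
    fix x show "v x = ?V x" using xv[of x] af[of x] \<open>?c = v ?\<eta>\<close> by simp
  qed
qed

fun Uw :: "nat \<Rightarrow> nat list \<Rightarrow> nat list" where
  "Uw n [] = []" | "Uw n (m # l) = [m..<n+1] @ Uw n l"

lemma u_aux: "set l \<subseteq> {1..n} \<Longrightarrow> foldr (\<circ>) (map (u_k n) (map (\<lambda>k. n + 1 - k) l)) id = wordfin n (Uw n l)"
proof (induction l)
  case Nil then show ?case by simp
next
  case (Cons m l)
  then have "n + 1 - (n + 1 - m) = m" by auto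
  then have "u_k n (n + 1 - m) = wordfin n [m..<n+1]" by (simp add: u_k_def)
  then show ?case using Cons by (simp add: wordfin_append)
qed

lemma u_lam_eq: "set l \<subseteq> {1..n} \<Longrightarrow> u_lam n (dual_lam n l) = wordfin n (Uw n l)"
  unfolding u_lam_def dual_lam_def using u_aux by (simp add: rev_map)

lemma set_Uw: "set l \<subseteq> {1..n} \<Longrightarrow> set (Uw n l) \<subseteq> {1..n}"
  by (induction l) auto

lemma length_Uw: "length (Uw n l) = sum_list (map (\<lambda>m. n + 1 - m) l)"
  by (induction l) auto

lemma V_one_aux:
  "sorted_wrt (>) l \<Longrightarrow> set l \<subseteq> {1..n} \<Longrightarrow> (\<forall>m\<in>set l. \<forall>t. 1 \<le> t \<and> t \<le> m \<longrightarrow> y t = 1)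
    \<Longrightarrow> wordfin n (Vw n l) y = (\<lambda>t. if t \<in> set l then -1 else y t)"
proof (induction l arbitrary: y)
  case Nil then show ?case by simp
next
  case (Cons m l)
  have m: "1 \<le> m" "m \<le> n" using Cons.prems by auto
  have ym: "1 \<le> t \<Longrightarrow> t \<le> m \<Longrightarrow> y t = 1" for t using Cons.prems(3) by auto
  have R: "wordfin n (Rw n m) y = y(m := -1)"
  proof
    fix t show "wordfin n (Rw n m) y t = (y(m := -1)) t"
      using R_formula[OF m, of y t] ym[of 1] ym[of t] ym[of "t+1"] m by auto
  qed
  have lt: "\<forall>x\<in>set l. x < m" using Cons.prems(1) by simp
  have hyp: "\<forall>m'\<in>set l. \<forall>t. 1 \<le> t \<and> t \<le> m' \<longrightarrow> (y(m := -1)) t = 1"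
    using lt ym by fastforce
  have c1: "wordfin n (Vw n (m # l)) y = wordfin n (Vw n l) (y(m := -1))"
    by (simp add: wordfin_append R)
  have s1: "sorted_wrt (>) l" using Cons.prems(1) by simp
  have s2: "set l \<subseteq> {1..n}" using Cons.prems(2) by simp
  have c2: "wordfin n (Vw n l) (y(m := -1)) = (\<lambda>t. if t \<in> set l then -1 else (y(m := -1)) t)"
    by (rule Cons.IH[OF s1 s2 hyp])
  have c3: "(\<lambda>t. if t \<in> set l then -1 else (y(m := -1)) t) = (\<lambda>t. if t \<in> set (m # l) then -1 else y t)"
    by (auto simp: fun_eq_iff)
  show ?case by (simp only: c1 c2 c3)
qed

lemma V_one: "sorted_wrt (>) l \<Longrightarrow> set l \<subseteq> {1..n} \<Longrightarrow> wordfin n (Vw n l) (one n) = oneS n (set l)"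
proof -
  assume h: "sorted_wrt (>) l" "set l \<subseteq> {1..n}"
  have "\<forall>m\<in>set l. \<forall>t. 1 \<le> t \<and> t \<le> m \<longrightarrow> one n t = 1" using h(2) by (auto simp: one_def)
  then have "wordfin n (Vw n l) (one n) = (\<lambda>t. if t \<in> set l then -1 else one n t)"
    using V_one_aux h by blast
  then show ?thesis using h(2) by (auto simp: fun_eq_iff oneS_def one_def)
qed

lemma U_one: "sorted_wrt (>) l \<Longrightarrow> set l \<subseteq> {1..n} \<Longrightarrow> wordfin n (Uw n l) (one n) = oneS n (set l)"
proof (induction l)
  case Nil then show ?case by (auto simp: one_def oneS_def fun_eq_iff)
next
  case (Cons m l)
  have m: "1 \<le> m" "m \<le> n" using Cons.prems by auto
  have lt: "\<forall>x\<in>set l. x < m" using Cons.prems(1) by simp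
  have IH: "wordfin n (Uw n l) (one n) = oneS n (set l)" using Cons by simp
  have "wordfin n (Uw n (m # l)) (one n) = wordfin n [m..<n+1] (oneS n (set l))"
    by (simp add: wordfin_append IH)
  also have "\<dots> = oneS n (set (m # l))"
  proof
    fix t
    have nl: "n \<notin> set l" using lt m by auto
    show "wordfin n [m..<n+1] (oneS n (set l)) t = oneS n (set (m # l)) t"
      unfolding U_formula[OF m] using m lt nl by (auto simp: oneS_def)
  qed
  finally show ?case .
qed

lemma distinct_sorted_gt: "sorted_wrt (>) (l::nat list) \<Longrightarrow> distinct l"
proof (induction l)
  case (Cons a l)
  then have "\<forall>x\<in>set l. x < a" by simp
  then have "a \<notin> set l" by (meson less_irrefl)
  then show ?case using Cons by simp
qed simp

lemma sum_bound:
  assumes "set l \<subseteq> {1..n}" "distinct l"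
  shows "sum_list (map (\<lambda>m. n + 1 - m) l) = card (set l) + (\<Sum>k\<in>set l. n - k)"
proof -
  have "sum_list (map (\<lambda>m. n + 1 - m) l) = (\<Sum>m\<in>set l. n + 1 - m)"
    using assms(2) by (simp add: sum_list_distinct_conv_sum_set)
  also have "\<dots> = (\<Sum>m\<in>set l. 1 + (n - m))"
  proof (rule sum.cong[OF refl])
    fix x assume "x \<in> set l"
    then have "x \<le> n" using assms(1) by (meson atLeastAtMost_iff subsetD)
    then show "n + 1 - x = 1 + (n - x)" by simp
  qed
  also have "\<dots> = (\<Sum>m\<in>set l. (1::nat)) + (\<Sum>m\<in>set l. n - m)" by (rule sum.distrib)
  also have "\<dots> = card (set l) + (\<Sum>k\<in>set l. n - k)" by simp
  finally show ?thesis .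
qed

lemma inv_neg:
  assumes ws: "set ws \<subseteq> {1..n}" and o: "wordfin n ws (one n) = oneS n S" and S: "S \<subseteq> {1..n}"
  shows "\<forall>k\<in>S. lexneg (wordfin n (rev ws) (eps k))"
proof
  fix k assume k: "k \<in> S"
  obtain \<tau> d where sp: "SP n (wordfin n ws) \<tau> d" using SP_word[OF ws] by blast
  obtain j where j: "j \<in> {1..n}" "\<tau> j = k" using SP_surj[OF sp] k S by blast
  have "d j = oneS n S k" using SP_one[OF sp j(1)] o j(2) by simp
  then have dj: "d j = -1" using k S by (auto simp: oneS_def)
  have ye: "wordfin n ws (eps j) = - eps k"
    using SP_eps[OF sp j(1)] dj j(2) by (simp add: fun_eq_iff)
  have "eps j = wordfin n (rev ws) (wordfin n ws (eps j))" by (simp add: wordfin_rev1)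
  also have "\<dots> = - wordfin n (rev ws) (eps k)" by (simp add: ye wordfin_uminus)
  finally have "wordfin n (rev ws) (eps k) = - eps j" by (simp add: minus_equation_iff)
  then show "lexneg (wordfin n (rev ws) (eps k))" using lexpos_eps by simp
qed

lemma lenW_lower:
  assumes ws: "set ws \<subseteq> {1..n}" and o: "wordfin n ws (one n) = oneS n S" and S: "S \<subseteq> {1..n}"
  shows "card S + (\<Sum>k\<in>S. n - k) \<le> lenW n (wordfin n ws)"
proof -
  have r: "set (rev ws) \<subseteq> {1..n}" using ws by simp
  have "card S + (\<Sum>k\<in>S. n - k) \<le> NN n (wordfin n (rev ws))"
    by (rule lower_bound[OF r S inv_neg[OF ws o S]])
  also have "\<dots> = NN n (wordfin n ws)" by (rule NN_rev_eq[OF ws])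
  also have "\<dots> = lenW n (wordfin n ws)" by (rule lenW_eq[OF ws, symmetric])
  finally show ?thesis .
qed

theorem proposition3p6:
  fixes n :: nat and lam :: "nat list"
  assumes "1 \<le> n" and "strict_partition n lam"
  shows "is_min_length_rep n (u_lam n (dual_lam n lam)) (coset_WP n (v_lam n lam))"
proof -
  have n1: "1 \<le> n" by fact
  have srt: "sorted_wrt (>) lam" and sl: "set lam \<subseteq> {1..n}"
    using assms(2) unfolding strict_partition_def by auto
  define S where "S = set lam"
  define vs where "vs = Vw n lam"
  define us where "us = Uw n lam"
  define V where "V = wordfin n vs"
  define u where "u = wordfin n us"
  define L where "L = card S + (\<Sum>k\<in>S. n - k)"
  have vs: "set vs \<subseteq> {1..n}" using set_Vw[OF sl] vs_def by simp
  have us: "set us \<subseteq> {1..n}" using set_Uw[OF sl] us_def by simp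
  have vV: "v_lam n lam = V" using v_lam_eq[OF n1 sl] V_def vs_def by simp
  have uu: "u_lam n (dual_lam n lam) = u" using u_lam_eq[OF sl] u_def us_def by simp
  have V1: "V (one n) = oneS n S" using V_one[OF srt sl] by (simp add: V_def vs_def S_def)
  have U1: "u (one n) = oneS n S" using U_one[OF srt sl] by (simp add: u_def us_def S_def)
  have SS: "S \<subseteq> {1..n}" using sl S_def by simp
  have lenu: "lenW n u \<le> L"
  proof -
    have "lenW n u = NN n u" using lenW_eq[OF us] u_def by simp
    also have "\<dots> \<le> length us" using NN_le_length[OF us] u_def by simp
    also have "length us = L"
      unfolding us_def L_def S_def length_Uw using sum_bound[OF sl distinct_sorted_gt[OF srt]] .
    finally show ?thesis .
  qed
  have mem: "\<exists>ws ps. set ws \<subseteq> {1..n} \<and> y = wordfin n ws \<and> set ps \<subseteq> {1..n-1} \<and> y = V \<circ> wordfin n ps"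
    if y: "y \<in> coset_WP n V" for y
  proof -
    obtain p where p: "p \<in> WP n" "y = V \<circ> p" using y unfolding coset_WP_def by auto
    obtain ps where ps: "set ps \<subseteq> {1..n-1}" "p = wordfin n ps" using p(1) unfolding WP_def by auto
    have "set ps \<subseteq> {1..n}" using ps(1) by (rule order_trans) auto
    then have "set (vs @ ps) \<subseteq> {1..n}" using vs by auto
    moreover have "y = wordfin n (vs @ ps)" using p ps V_def by (simp add: wordfin_append)
    ultimately show ?thesis using ps p by blast
  qed
  have one_y: "y (one n) = oneS n S" if "y = V \<circ> wordfin n ps" "set ps \<subseteq> {1..n-1}" for y ps
    using that V1 WP_one by simp
  have lower: "L \<le> lenW n y" if y: "y \<in> coset_WP n V" for y
  proof -
    obtain ws ps where h: "set ws \<subseteq> {1..n}" "y = wordfin n ws" "set ps \<subseteq> {1..n-1}" "y = V \<circ> wordfin n ps"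
      using mem[OF y] by blast
    have "wordfin n ws (one n) = oneS n S" using one_y[OF h(4,3)] h(2) by simp
    then show ?thesis unfolding L_def h(2) by (rule lenW_lower[OF h(1) _ SS])
  qed
  have u_in: "u \<in> coset_WP n V"
  proof -
    let ?p = "wordfin n (rev vs @ us)"
    have ps: "set (rev vs @ us) \<subseteq> {1..n}" using vs us by auto
    have "?p (one n) = wordfin n (rev vs) (u (one n))" by (simp add: wordfin_append u_def)
    also have "\<dots> = wordfin n (rev vs) (V (one n))" using U1 V1 by simp
    also have "\<dots> = one n" by (simp add: V_def wordfin_rev1)
    finally have pW: "?p \<in> WP n" using WP_char[OF ps] by blast
    have "u = V \<circ> ?p" by (simp add: V_def u_def wordfin_append fun_eq_iff wordfin_rev2)
    then show ?thesis unfolding coset_WP_def using pW by (rule image_eqI)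
  qed
  show ?thesis unfolding is_min_length_rep_def vV uu
  proof (intro conjI ballI)
    show "u \<in> coset_WP n V" by (rule u_in)
  next
    fix y assume y: "y \<in> coset_WP n V"
    show "lenW n u \<le> lenW n y" using lenu lower[OF y] by simp
  next
    fix y assume y: "y \<in> coset_WP n V"
    show "lenW n y = lenW n u \<longrightarrow> y = u"
    proof
      assume eq: "lenW n y = lenW n u"
      obtain ws ps where ws: "set ws \<subseteq> {1..n}" "y = wordfin n ws"
        and ps: "set ps \<subseteq> {1..n-1}" "y = V \<circ> wordfin n ps"
        using mem[OF y] by blast
      have lenyN: "lenW n y = NN n y" using lenW_eq[OF ws(1)] ws(2) by simp
      have NNy: "NN n y = L" using eq lenu lower[OF y] lenyN by simp
      have asc: "\<forall>k. 1 \<le> k \<and> k < n \<longrightarrow> \<not> lexneg (wordfin n ws (alpha n k))"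
      proof (intro allI impI notI)
        fix k assume k: "1 \<le> k \<and> k < n" and neg: "lexneg (wordfin n ws (alpha n k))"
        have st: "NN n (wordfin n (ws @ [k])) + 1 = NN n (wordfin n ws)"
          using NN_word_step[of k n ws] k neg by auto
        have psk: "set (ps @ [k]) \<subseteq> {1..n-1}" using ps k by auto
        have h: "V \<circ> wordfin n ps = wordfin n ws" using ws(2) ps(2) by simp
        have "wordfin n (ws @ [k]) = V \<circ> wordfin n (ps @ [k])"
          by (simp add: wordfin_snoc o_assoc h)
        moreover have "wordfin n (ps @ [k]) \<in> WP n" unfolding WP_def using psk by blast
        ultimately have "wordfin n (ws @ [k]) \<in> coset_WP n V" unfolding coset_WP_def by (rule image_eqI)
        then have "L \<le> lenW n (wordfin n (ws @ [k]))" by (rule lower)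
        also have "\<dots> = NN n (wordfin n (ws @ [k]))" by (rule lenW_eq) (use ws k in auto)
        finally show False using st NNy ws(2) by simp
      qed
      define qs where "qs = rev ws @ us"
      have qsn: "set qs \<subseteq> {1..n}" using ws us unfolding qs_def by auto
      have yo: "y (one n) = oneS n S" by (rule one_y[OF ps(2) ps(1)])
      have "wordfin n qs (one n) = wordfin n (rev ws) (u (one n))"
        by (simp add: qs_def wordfin_append u_def)
      also have "\<dots> = wordfin n (rev ws) (wordfin n ws (one n))" using U1 yo ws(2) by simp
      also have "\<dots> = one n" by (rule wordfin_rev1)
      finally have "wordfin n qs \<in> WP n" using WP_char[OF qsn] by blast
      then obtain qs' where qs': "set qs' \<subseteq> {1..n-1}" "wordfin n qs' = wordfin n qs"
        unfolding WP_def by auto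
      have "wordfin n ws \<circ> wordfin n qs' = wordfin n ws \<circ> (wordfin n (rev ws) \<circ> wordfin n us)"
        using qs'(2) by (simp only: qs_def wordfin_append)
      also have "\<dots> = u" by (simp add: fun_eq_iff wordfin_rev2 u_def)
      finally have yq: "wordfin n ws \<circ> wordfin n qs' = u" .
      have add: "NN n (wordfin n ws \<circ> wordfin n qs') = NN n (wordfin n ws) + NN n (wordfin n qs')"
        by (rule coset_add[OF ws(1) asc qs'(1)])
      have "NN n u = lenW n u" using lenW_eq[OF us] u_def by simp
      then have "NN n u = NN n (wordfin n ws)" using eq lenyN ws(2) by simp
      then have q0: "NN n (wordfin n qs') = 0" using add yq by simp
      have qs'n: "set qs' \<subseteq> {1..n}" using qs'(1) by (rule order_trans) auto
      have "\<forall>k\<in>{1..n}. \<not> lexneg (wordfin n qs' (alpha n k))" using NN_pos q0 by fastforce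
      then have "wordfin n qs' = id" by (rule word_simple_pos_id[OF qs'n])
      then show "y = u" using yq ws(2) by simp
    qed
  qed
qed

end
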